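(* Let $k\ge 4$ and let $w$ be a minimal uncompletable word for $S_k$. Let $p,q\in\{u,v\}$ be two consecutive occurrences in $w$ ($p$ before $q$), with sets of forbidden local positions $F_p,F_q\subseteq\{0,\dots,k-1\}$. If $|F_p|>|F_q|$, then one of the following holds: (i) $p$ and $q$ are both occurrences of $u$, $F_p=\{0,k-j,k-j+1,\dots,k-1\}$ and $F_q=\{1,2,\dots,j\}$ for some $1\le j\le k-2$; (ii) $p$ is an occurrence of $v$, $q$ is an occurrence of $u$, these occurrences overlap, $F_p=\{0,k-1\}$ and $F_q=\{1\}$; (iii) $p$ is an occurrence of $u$, $q$ is an occurrence of $v$, $F_q=\{0,1,\dots,i\}\cup\{j,j+1,\dots,k-1\}$ and $F_p=\{0\}\cup\{j-i-1,\dots,k-1\}$ for some integers $0\le i<j\le k$ with $j\ne i+1$ (where $\{j,\dots,k-1\}$ is empty if $j=k$), and the number of letters strictly between these two occurrences is congruent to $k-1-i$ modulo $k$.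
   Context: $\Sigma=\{a,b\}$. $S_k=\left(\Sigma^k\setminus\{ba^{k-1},b^{k-1}a\}\right)\cup\left(\Sigma^{k-1}\setminus\{a^{k-1},b^{k-1}\}\right)$, $u=ba^{k-1}$, $v=b^{k-1}a$. $\mathit{Fact}(S^* )$ and $\mathit{Pref}(S^* )$ are the sets of factors and of prefixes of words in $S^*$. A word $w\notin\mathit{Fact}(S_k^* )$ is uncompletable; a minimal uncompletable word is one of minimal length. For $w=w_1\cdots w_n$, $w[i..j]=w_i\cdots w_j$ (empty if $i>j$). A position $j$, $0\le j\le n-1$, is forbidden in $w$ if $w[j+1..n]\notin\mathit{Pref}(S_k^* )$. An occurrence of $p\in\{u,v\}$ in $w$ is an index $s$ with $w[s+1..s+k]=p$; local position $i\in\{0,\dots,k-1\}$ of the occurrence is the position $s+i$ of $w$, and it is forbidden in the occurrence if $s+i$ is forbidden in $w$. Two occurrences of words from $\{u,v\}$ starting at $s<t$ overlap if $t<s+k$; they are consecutive if either they overlap or they are the only occurrences of $u$ or $v$ lying inside the factor $w[s+1..t+k]$. *)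

theory Defs
  imports Main "HOL-Number_Theory.Cong"
begin

datatype sym = A | B

type_synonym word = "sym list"

definition Sk :: "nat \<Rightarrow> word set" where
  "Sk k = ({w. length w = k} - {B # replicate (k-1) A, replicate (k-1) B @ [A]})
        \<union> ({w. length w = k - 1} - {replicate (k-1) A, replicate (k-1) B})"

definition uw :: "nat \<Rightarrow> word" where "uw k = B # replicate (k-1) A"
definition vw :: "nat \<Rightarrow> word" where "vw k = replicate (k-1) B @ [A]"

definition kstar :: "word set \<Rightarrow> word set" where
  "kstar S = {concat ws | ws. set ws \<subseteq> S}"

definition Fact :: "word set \<Rightarrow> word set" where
  "Fact L = {x. \<exists>y z. y @ x @ z \<in> L}"

definition Pref :: "word set \<Rightarrow> word set" where
  "Pref L = {x. \<exists>z. x @ z \<in> L}"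

definition uncompletable :: "nat \<Rightarrow> word \<Rightarrow> bool" where
  "uncompletable k w \<longleftrightarrow> w \<notin> Fact (kstar (Sk k))"

definition min_uncompletable :: "nat \<Rightarrow> word \<Rightarrow> bool" where
  "min_uncompletable k w \<longleftrightarrow> uncompletable k w \<and>
      (\<forall>w'. uncompletable k w' \<longrightarrow> length w \<le> length w')"

definition forbidden :: "nat \<Rightarrow> word \<Rightarrow> nat \<Rightarrow> bool" where
  "forbidden k w j \<longleftrightarrow> j < length w \<and> drop j w \<notin> Pref (kstar (Sk k))"

definition occ :: "nat \<Rightarrow> word \<Rightarrow> word \<Rightarrow> nat \<Rightarrow> bool" where
  "occ k w p s \<longleftrightarrow> s + k \<le> length w \<and> take k (drop s w) = p"

definition occ_uv :: "nat \<Rightarrow> word \<Rightarrow> nat \<Rightarrow> bool" where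
  "occ_uv k w s \<longleftrightarrow> occ k w (uw k) s \<or> occ k w (vw k) s"

definition Floc :: "nat \<Rightarrow> word \<Rightarrow> nat \<Rightarrow> nat set" where
  "Floc k w s = {i. i < k \<and> forbidden k w (s + i)}"

definition overlap :: "nat \<Rightarrow> nat \<Rightarrow> nat \<Rightarrow> bool" where
  "overlap k s t \<longleftrightarrow> t < s + k"

definition consecutive :: "nat \<Rightarrow> word \<Rightarrow> nat \<Rightarrow> nat \<Rightarrow> bool" where
  "consecutive k w s t \<longleftrightarrow> s < t \<and> occ_uv k w s \<and> occ_uv k w t \<and>
     (overlap k s t \<or>
      (\<forall>r. occ_uv k w r \<and> s \<le> r \<and> r + k \<le> t + k \<longrightarrow> r = s \<or> r = t))"

end

theory Submission
  imports Defs
begin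


lemma Sk_len: "x \<in> Sk k \<Longrightarrow> length x = k \<or> length x = k - 1"
  by (auto simp: Sk_def)

lemma Sk_k: "length x = k \<Longrightarrow> 1 \<le> k \<Longrightarrow> x \<in> Sk k \<longleftrightarrow> x \<noteq> uw k \<and> x \<noteq> vw k"
  by (auto simp: Sk_def uw_def vw_def)

lemma Sk_k1: "length x = k - 1 \<Longrightarrow> 1 \<le> k \<Longrightarrow> x \<in> Sk k \<longleftrightarrow> x \<noteq> replicate (k-1) A \<and> x \<noteq> replicate (k-1) B"
  by (auto simp: Sk_def)

lemma kstar_cons: "c \<in> S \<Longrightarrow> y \<in> kstar S \<Longrightarrow> c @ y \<in> kstar S"
proof -
  assume "c \<in> S" "y \<in> kstar S"
  then obtain ws where "y = concat ws" "set ws \<subseteq> S" by (auto simp: kstar_def)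
  then show ?thesis using \<open>c \<in> S\<close> unfolding kstar_def by (intro CollectI exI[of _ "c # ws"]) auto
qed

lemma kstar_Nil: "[] \<in> kstar S"
  unfolding kstar_def by (intro CollectI exI[of _ "[]"]) auto

lemma uw_nth: "i < k \<Longrightarrow> uw k ! i = (if i = 0 then B else A)"
  by (auto simp: uw_def nth_Cons')
lemma vw_nth: "i < k \<Longrightarrow> vw k ! i = (if i = k - 1 then A else B)"
  by (auto simp: vw_def nth_append)
lemma uw_len[simp]: "k \<ge> 1 \<Longrightarrow> length (uw k) = k" by (cases k) (auto simp: uw_def)
lemma vw_len[simp]: "k \<ge> 1 \<Longrightarrow> length (vw k) = k" by (cases k) (auto simp: vw_def)

lemma short_pref:
  assumes "length x < k" "2 \<le> k"
  shows "x \<in> Pref (kstar (Sk k))"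
proof -
  define z where "z = replicate (k - length x) B"
  have len: "length (x @ z) = k" using assms by (simp add: z_def)
  have last: "(x @ z) ! (k - 1) = B" using assms by (auto simp: z_def nth_append)
  have "x @ z \<noteq> uw k" using last assms uw_nth[of "k-1" k] by auto
  moreover have "x @ z \<noteq> vw k" using last assms vw_nth[of "k-1" k] by auto
  ultimately have "x @ z \<in> Sk k" using Sk_k[OF len] assms by auto
  hence "x @ z \<in> kstar (Sk k)" using kstar_cons[OF _ kstar_Nil] by fastforce
  thus ?thesis unfolding Pref_def by blast
qed

lemma pref_app: "c \<in> S \<Longrightarrow> y \<in> Pref (kstar S) \<Longrightarrow> c @ y \<in> Pref (kstar S)"
  unfolding Pref_def using kstar_cons by fastforce

lemma Nil_pref: "[] \<in> Pref (kstar S)"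
  unfolding Pref_def using kstar_Nil by fastforce

lemma pref_rec:
  assumes "2 \<le> k" "k \<le> length x"
  shows "x \<in> Pref (kstar (Sk k)) \<longleftrightarrow>
     (take (k-1) x \<in> Sk k \<and> drop (k-1) x \<in> Pref (kstar (Sk k))) \<or>
     (take k x \<in> Sk k \<and> drop k x \<in> Pref (kstar (Sk k)))"
proof
  assume "x \<in> Pref (kstar (Sk k))"
  then obtain z ws where xz: "x @ z = concat ws" and ws: "set ws \<subseteq> Sk k"
    by (auto simp: Pref_def kstar_def)
  have "ws \<noteq> []" using xz assms by auto
  then obtain c ws' where wsc: "ws = c # ws'" by (cases ws) auto
  have c: "c \<in> Sk k" using ws wsc by auto
  have lc: "length c = k \<or> length c = k - 1" using Sk_len[OF c] .
  have eq: "x @ z = c @ concat ws'" using xz wsc by simp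
  have "length c \<le> length x" using lc assms by auto
  hence tc: "take (length c) x = c" and dc: "drop (length c) x @ z = concat ws'"
    using eq by (metis append_eq_append_conv_if)+
  have dp: "drop (length c) x \<in> Pref (kstar (Sk k))"
    using dc ws wsc unfolding Pref_def kstar_def by auto
  show "(take (k-1) x \<in> Sk k \<and> drop (k-1) x \<in> Pref (kstar (Sk k))) \<or>
     (take k x \<in> Sk k \<and> drop k x \<in> Pref (kstar (Sk k)))"
    using lc tc dp c by auto
next
  assume "(take (k-1) x \<in> Sk k \<and> drop (k-1) x \<in> Pref (kstar (Sk k))) \<or>
     (take k x \<in> Sk k \<and> drop k x \<in> Pref (kstar (Sk k)))"
  then show "x \<in> Pref (kstar (Sk k))"
    by (metis append_take_drop_id pref_app)
qed

definition Kc :: "nat \<Rightarrow> word \<Rightarrow> nat \<Rightarrow> bool" where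
  "Kc k w j \<longleftrightarrow> (\<forall>i<k-1. w!(j+i) = w!j)"

lemma Kc_iff:
  assumes "j + k - 1 \<le> length w" "2 \<le> k"
  shows "(take (k-1) (drop j w) = replicate (k-1) A \<or> take (k-1) (drop j w) = replicate (k-1) B) \<longleftrightarrow> Kc k w j"
proof
  assume h: "take (k-1) (drop j w) = replicate (k-1) A \<or> take (k-1) (drop j w) = replicate (k-1) B"
  then obtain c where c: "take (k-1) (drop j w) = replicate (k-1) c" by blast
  have "\<forall>i<k-1. w!(j+i) = c"
  proof (intro allI impI)
    fix i assume "i < k-1"
    hence "take (k-1) (drop j w) ! i = c" using c by simp
    thus "w!(j+i) = c" using \<open>i < k-1\<close> assms by simp
  qed
  moreover have "w!j = c" using spec[OF calculation, of 0] assms by simp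
  ultimately show "Kc k w j" unfolding Kc_def by simp
next
  assume "Kc k w j"
  hence all: "\<forall>i<k-1. w!(j+i) = w!j" by (simp add: Kc_def)
  have "take (k-1) (drop j w) = replicate (k-1) (w!j)"
    by (rule nth_equalityI) (use assms all in auto)
  moreover have "w!j = A \<or> w!j = B" by (cases "w!j") auto
  ultimately show "take (k-1) (drop j w) = replicate (k-1) A \<or> take (k-1) (drop j w) = replicate (k-1) B" by auto
qed

lemma notF_pref: "\<not> forbidden k w m \<longleftrightarrow> drop m w \<in> Pref (kstar (Sk k))"
proof (cases "m < length w")
  case False
  hence "drop m w = []" by simp
  thus ?thesis using False Nil_pref unfolding forbidden_def by metis
qed (simp add: forbidden_def)

lemma Frec:
  assumes "2 \<le> k"
  shows "forbidden k w j \<longleftrightarrow> j + k \<le> length w \<and> (Kc k w j \<or> forbidden k w (j+k-1)) \<and> (occ_uv k w j \<or> forbidden k w (j+k))"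
proof (cases "j + k \<le> length w")
  case False
  hence "length (drop j w) < k" using assms by simp
  hence "drop j w \<in> Pref (kstar (Sk k))" using short_pref assms by blast
  thus ?thesis using False notF_pref by blast
next
  case True
  have jn: "j < length w" using True assms by simp
  have len: "k \<le> length (drop j w)" using True by simp
  have l1: "length (take (k-1) (drop j w)) = k - 1" using True by simp
  have l2: "length (take k (drop j w)) = k" using True by simp
  have s1: "take (k-1) (drop j w) \<in> Sk k \<longleftrightarrow> \<not> Kc k w j"
  proof -
    have "j + k - 1 \<le> length w" using True by simp
    thus ?thesis using Sk_k1[OF l1] Kc_iff[of j k w] assms by auto
  qed
  have s2: "take k (drop j w) \<in> Sk k \<longleftrightarrow> \<not> occ_uv k w j"
    using Sk_k[OF l2] True assms by (auto simp: occ_uv_def occ_def)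
  have d1: "drop (k-1) (drop j w) = drop (j+k-1) w" using assms by (simp add: add.commute)
  have d2: "drop k (drop j w) = drop (j+k) w" by (simp add: add.commute)
  have "forbidden k w j \<longleftrightarrow> drop j w \<notin> Pref (kstar (Sk k))" using jn by (simp add: forbidden_def)
  also have "\<dots> \<longleftrightarrow> \<not> ((\<not> Kc k w j \<and> \<not> forbidden k w (j+k-1)) \<or> (\<not> occ_uv k w j \<and> \<not> forbidden k w (j+k)))"
    using pref_rec[OF assms len] s1 s2 d1 d2 notF_pref by metis
  finally show ?thesis using True by blast
qed

lemma occ_nth:
  assumes lp: "length p = k"
  shows "occ k w p s \<longleftrightarrow> s + k \<le> length w \<and> (\<forall>i<k. w!(s+i) = p!i)"
proof
  assume "occ k w p s"
  hence a: "s + k \<le> length w" "take k (drop s w) = p" by (auto simp: occ_def)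
  have "\<forall>i<k. w!(s+i) = p!i"
  proof (intro allI impI)
    fix i assume "i < k"
    hence "p ! i = drop s w ! i" using a by (metis nth_take)
    thus "w ! (s+i) = p ! i" using a by simp
  qed
  thus "s + k \<le> length w \<and> (\<forall>i<k. w!(s+i) = p!i)" using a by simp
next
  assume a: "s + k \<le> length w \<and> (\<forall>i<k. w!(s+i) = p!i)"
  have "take k (drop s w) = p" by (rule nth_equalityI) (use a lp in auto)
  thus "occ k w p s" using a by (simp add: occ_def)
qed

lemma occ_u_iff: "1 \<le> k \<Longrightarrow> occ k w (uw k) s \<longleftrightarrow> s + k \<le> length w \<and> (\<forall>i<k. w!(s+i) = (if i=0 then B else A))"
  using occ_nth[of "uw k" k w s] uw_nth[of _ k] by auto

lemma occ_v_iff: "1 \<le> k \<Longrightarrow> occ k w (vw k) s \<longleftrightarrow> s + k \<le> length w \<and> (\<forall>i<k. w!(s+i) = (if i=k-1 then A else B))"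
  using occ_nth[of "vw k" k w s] vw_nth[of _ k] by auto

lemma unc_forb:
  assumes "uncompletable k w" "2 \<le> k" "c < k"
  shows "forbidden k w c"
proof (rule ccontr)
  assume "\<not> forbidden k w c"
  hence "drop c w \<in> Pref (kstar (Sk k))" using notF_pref by blast
  then obtain z where z: "drop c w @ z \<in> kstar (Sk k)" by (auto simp: Pref_def)
  define x where "x = take c w"
  define y where "y = replicate (k - length x) A"
  have lx: "length x < k" using assms by (simp add: x_def)
  have ly: "length (y @ x) = k" using lx by (simp add: y_def)
  have h0: "(y @ x) ! 0 = A" using lx by (simp add: y_def nth_append)
  have "y @ x \<noteq> uw k" using h0 uw_nth[of 0 k] assms by auto
  moreover have "y @ x \<noteq> vw k" using h0 vw_nth[of 0 k] assms by auto
  ultimately have "y @ x \<in> Sk k" using Sk_k[OF ly] assms by auto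
  hence "(y @ x) @ (drop c w @ z) \<in> kstar (Sk k)" using kstar_cons z by blast
  hence "y @ w @ z \<in> kstar (Sk k)" by (metis append.assoc append_take_drop_id x_def)
  hence "w \<in> Fact (kstar (Sk k))" unfolding Fact_def by blast
  thus False using assms by (simp add: uncompletable_def)
qed

lemma split_lemma:
  assumes "y @ r = concat ws" "set ws \<subseteq> Sk k" "k \<le> length r" "2 \<le> k"
  shows "\<exists>c<k. drop c r \<in> kstar (Sk k)"
  using assms
proof (induction ws arbitrary: y)
  case Nil
  then show ?case by simp
next
  case (Cons x ws)
  have xS: "x \<in> Sk k" and wsS: "set ws \<subseteq> Sk k" using Cons.prems by auto
  have lx: "length x \<le> k" using Sk_len[OF xS] by auto
  show ?case
  proof (cases "length x \<le> length y")
    case True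
    then obtain y' where "y = x @ y'" using Cons.prems(1)
      by (metis append_eq_append_conv_if append_take_drop_id concat.simps(2))
    hence "y' @ r = concat ws" using Cons.prems(1) by simp
    thus ?thesis using Cons.IH wsS Cons.prems by blast
  next
    case False
    have eq: "y @ r = x @ concat ws" using Cons.prems(1) by simp
    have ty: "y = take (length y) x" and rd: "r = drop (length y) x @ concat ws"
      using eq False by (auto simp: append_eq_append_conv_if)
    show ?thesis
    proof (cases "y = []")
      case True
      hence "r = concat (x # ws)" using eq by simp
      moreover have "concat ws \<in> kstar (Sk k)" using wsS unfolding kstar_def by auto
      ultimately have "drop 0 r \<in> kstar (Sk k)" using xS kstar_cons by fastforce
      thus ?thesis using assms by (metis neq0_conv not_numeral_le_zero)
    next
      case ne: False
      define c where "c = length x - length y"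
      have "length y > 0" using ne by simp
      hence "c < k" using lx False unfolding c_def by arith
      moreover have "drop c r = concat ws" using rd by (simp add: c_def)
      hence "drop c r \<in> kstar (Sk k)" using wsS unfolding kstar_def by auto
      ultimately show ?thesis by blast
    qed
  qed
qed

lemma forb_unc:
  assumes "2 \<le> k" "k \<le> length w" "\<forall>c<k. forbidden k w c"
  shows "uncompletable k w"
proof (rule ccontr)
  assume "\<not> uncompletable k w"
  then obtain y z ws where "y @ w @ z = concat ws" "set ws \<subseteq> Sk k"
    by (auto simp: uncompletable_def Fact_def kstar_def)
  then obtain c where c: "c < k" "drop c (w @ z) \<in> kstar (Sk k)"
    using split_lemma[of y "w @ z" ws k] assms by auto
  have "drop c (w @ z) = drop c w @ z" using c assms by simp
  hence "drop c w \<in> Pref (kstar (Sk k))" using c unfolding Pref_def by auto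
  thus False using assms c notF_pref by blast
qed



lemma F_len: "2 \<le> k \<Longrightarrow> forbidden k w j \<Longrightarrow> j + k \<le> length w"
  using Frec by blast

lemma F_step: "2 \<le> k \<Longrightarrow> forbidden k w j \<Longrightarrow> \<not> occ_uv k w j \<Longrightarrow> forbidden k w (j+k)"
  using Frec by blast

lemma F_step1: "2 \<le> k \<Longrightarrow> forbidden k w j \<Longrightarrow> \<not> Kc k w j \<Longrightarrow> forbidden k w (j+k-1)"
  using Frec by blast

lemma v_Kc: assumes "2 \<le> k" "occ k w (vw k) j" shows "Kc k w j"
proof -
  have a: "\<forall>i<k. w!(j+i) = (if i=k-1 then A else B)" using occ_v_iff[of k w j] assms by simp
  have b: "w!j = B" using a[rule_format, of 0] assms by simp
  show ?thesis unfolding Kc_def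
  proof (intro allI impI)
    fix i assume "i < k - 1"
    thus "w!(j+i) = w!j" using a[rule_format, of i] b by simp
  qed
qed

lemma u_nKc: assumes "3 \<le> k" "occ k w (uw k) j" shows "\<not> Kc k w j"
proof
  assume "Kc k w j"
  hence kk: "\<forall>i<k-1. w!(j+i) = w!j" unfolding Kc_def by simp
  have c: "w!(j+1) = w!j" by (rule kk[rule_format]) (use assms in simp)
  have a: "\<forall>i<k. w!(j+i) = (if i=0 then B else A)" using occ_u_iff[of k w j] assms by simp
  have "w!(j+0) = B" "w!(j+1) = A" using a[rule_format, of 0] a[rule_format, of 1] assms by auto
  thus False using c by simp
qed

lemma occ_len: "occ k w p j \<Longrightarrow> j + k \<le> length w"
  by (simp add: occ_def)

lemma F_v: "2 \<le> k \<Longrightarrow> occ k w (vw k) j \<Longrightarrow> forbidden k w j"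
  using Frec[of k w j] v_Kc occ_len by (auto simp: occ_uv_def)

lemma F_u: "3 \<le> k \<Longrightarrow> occ k w (uw k) j \<Longrightarrow> forbidden k w j \<longleftrightarrow> forbidden k w (j+k-1)"
  using Frec[of k w j] u_nKc[of k w j] occ_len[of k w "uw k" j] F_len[of k w "j+k-1"] by (auto simp: occ_uv_def)

lemma F_freeK: "2 \<le> k \<Longrightarrow> \<not> occ_uv k w j \<Longrightarrow> Kc k w j \<Longrightarrow> forbidden k w j \<longleftrightarrow> forbidden k w (j+k)"
  using Frec[of k w j] F_len[of k w "j+k"] by auto

lemma F_free: "2 \<le> k \<Longrightarrow> \<not> occ_uv k w j \<Longrightarrow> \<not> Kc k w j \<Longrightarrow> forbidden k w j \<longleftrightarrow> forbidden k w (j+k-1) \<and> forbidden k w (j+k)"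
  using Frec[of k w j] F_len[of k w "j+k"] by auto

lemma Kc_take: "j + k - 1 \<le> n' \<Longrightarrow> 2 \<le> k \<Longrightarrow> Kc k (take n' w) j \<longleftrightarrow> Kc k w j"
  unfolding Kc_def by auto

lemma occ_take: "j + k \<le> n' \<Longrightarrow> occ k (take n' w) p j \<longleftrightarrow> occ k w p j"
  unfolding occ_def by (auto simp: drop_take take_take min_def)

lemma uv_neq: "3 \<le> k \<Longrightarrow> uw k \<noteq> vw k"
proof -
  assume k: "3 \<le> k"
  have "uw k ! 1 = A" using uw_nth[of 1 k] k by simp
  moreover have "vw k ! 1 = B" using vw_nth[of 1 k] k by simp
  ultimately show ?thesis by auto
qed

lemma trunc_F:
  assumes k: "3 \<le> k" and "k \<le> n'" "n' \<le> length w"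
    and hF: "\<forall>j. n' - k \<le> j \<and> j < n' \<longrightarrow> \<not> forbidden k w j"
    and hv: "\<not> occ k w (vw k) (n' - k)"
  shows "j < n' \<Longrightarrow> forbidden k (take n' w) j \<longleftrightarrow> forbidden k w j"
proof (induction "n' - j" arbitrary: j rule: less_induct)
  case less
  have k2: "2 \<le> k" using k by simp
  have lt: "length (take n' w) = n'" using assms by simp
  show ?case
  proof (cases "n' - k \<le> j")
    case True
    have "\<not> forbidden k w j" using hF True less.prems by blast
    moreover have "\<not> forbidden k (take n' w) j"
    proof
      assume F': "forbidden k (take n' w) j"
      hence jk: "j + k \<le> n'" using F_len[OF k2] lt by fastforce
      hence jeq: "j = n' - k" using True by simp
      have "\<not> forbidden k (take n' w) (j+k-1)" using F_len[OF k2, of "take n' w" "j+k-1"] lt jk k True by auto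
      moreover have "\<not> forbidden k (take n' w) (j+k)" using F_len[OF k2, of "take n' w" "j+k"] lt jk k True by auto
      ultimately have "Kc k (take n' w) j \<and> occ_uv k (take n' w) j" using F' Frec[OF k2] by blast
      hence "Kc k w j \<and> occ_uv k w j" using Kc_take[of j k n' w] occ_take[of j k n' w] jk k2
        by (auto simp: occ_uv_def)
      thus False using hv jeq u_nKc[OF k] by (auto simp: occ_uv_def)
    qed
    ultimately show ?thesis by blast
  next
    case False
    hence jk: "j + k < n'" using assms by simp
    have IH1: "forbidden k (take n' w) (j+k-1) \<longleftrightarrow> forbidden k w (j+k-1)"
      using less.hyps[of "j+k-1"] jk k by simp
    have IH2: "forbidden k (take n' w) (j+k) \<longleftrightarrow> forbidden k w (j+k)"
      using less.hyps[of "j+k"] jk k by simp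
    have "Kc k (take n' w) j \<longleftrightarrow> Kc k w j" using Kc_take[of j k n' w] jk k2 by simp
    moreover have "occ_uv k (take n' w) j \<longleftrightarrow> occ_uv k w j" using occ_take[of j k n' w] jk
      by (simp add: occ_uv_def)
    ultimately show ?thesis using Frec[OF k2, of "take n' w" j] Frec[OF k2, of w j] IH1 IH2 lt jk assms
      by auto
  qed
qed

lemma trunc_unc:
  assumes k: "3 \<le> k" and "k \<le> n'" "n' \<le> length w"
    and hF: "\<forall>j. n' - k \<le> j \<and> j < n' \<longrightarrow> \<not> forbidden k w j"
    and hv: "\<not> occ k w (vw k) (n' - k)"
    and unc: "uncompletable k w"
  shows "uncompletable k (take n' w)"
proof (rule forb_unc)
  show "2 \<le> k" using k by simp
  show "k \<le> length (take n' w)" using assms by simp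
  show "\<forall>c<k. forbidden k (take n' w) c"
    using trunc_F[OF assms(1-5)] unc_forb[OF unc] k assms(2) by fastforce
qed

lemma minM:
  assumes k: "4 \<le> k" and mu: "min_uncompletable k w" and ou: "occ k w (uw k) t"
    and hF: "\<forall>i<k. \<not> forbidden k w (t+i)"
  shows False
proof -
  have k2: "2 \<le> k" and k3: "3 \<le> k" using k by auto
  have unc: "uncompletable k w" and mn: "\<And>w'. uncompletable k w' \<Longrightarrow> length w \<le> length w'"
    using mu by (auto simp: min_uncompletable_def)
  have tk: "t + k \<le> length w" using occ_len[OF ou] .
  have nv: "\<not> occ k w (vw k) t" using ou uv_neq[OF k3] by (auto simp: occ_def)
  have "uncompletable k (take (t+k) w)"
    apply (rule trunc_unc[OF k3 _ tk _ _ unc])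
    using hF nv by (auto, metis add_diff_cancel_left' le_Suc_ex less_diff_conv2 add.commute)
  hence "length w \<le> t + k" using mn tk by fastforce
  hence n: "length w = t + k" using tk by simp
  have F0: "forbidden k w 0" using unc_forb[OF unc k2] k by simp
  have t1: "1 \<le> t"
  proof (rule ccontr)
    assume "\<not> 1 \<le> t"
    hence "t = 0" by simp
    hence "forbidden k w (k-1)" using F0 F_u[OF k3 ou] by simp
    thus False using F_len[OF k2, of w "k-1"] n \<open>t = 0\<close> k by simp
  qed
  have at: "\<forall>i<k. w!(t+i) = (if i=0 then B else A)" using ou occ_u_iff[of k w t] k by simp
  have nK: "\<not> Kc k w (t-1)"
  proof
    assume "Kc k w (t-1)"
    hence kk: "\<forall>i<k-1. w!(t-1+i) = w!(t-1)" unfolding Kc_def by simp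
    have "w!(t-1+1) = w!(t-1)" by (rule kk[rule_format]) (use k in simp)
    moreover have "w!(t-1+2) = w!(t-1)" by (rule kk[rule_format]) (use k in simp)
    moreover have "t-1+1 = t+0" "t-1+2 = t+1" using t1 by auto
    moreover have "w!(t+0) = B" "w!(t+1) = A" using at[rule_format, of 0] at[rule_format, of 1] k by auto
    ultimately show False by simp
  qed
  have "t - 1 + k - 1 + k > length w" using n k t1 by simp
  hence "\<not> forbidden k w (t-1+k-1)" by (meson F_len[OF k2] not_le)
  hence Ft1: "\<not> forbidden k w (t-1)" using Frec[OF k2, of w "t-1"] nK by blast
  have hF2: "\<forall>j. (length w - 1) - k \<le> j \<and> j < length w - 1 \<longrightarrow> \<not> forbidden k w j"
  proof (intro allI impI)
    fix j assume j: "(length w - 1) - k \<le> j \<and> j < length w - 1"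
    show "\<not> forbidden k w j"
    proof (cases "j = t - 1")
      case True thus ?thesis using Ft1 by simp
    next
      case False
      hence "t \<le> j" "j < t + k" using j n t1 by auto
      thus ?thesis using hF by (metis add_diff_inverse_nat add_less_cancel_left not_le)
    qed
  qed
  have nv2: "\<not> occ k w (vw k) (length w - 1 - k)"
  proof
    assume "occ k w (vw k) (length w - 1 - k)"
    hence vv: "\<forall>i<k. w!(length w - 1 - k + i) = (if i=k-1 then A else B)" using occ_v_iff[of k w] k by auto
    have "w!(length w - 1 - k + 2) = B" using vv[rule_format, of 2] k by simp
    moreover have "length w - 1 - k + 2 = t + 1" using n t1 k by simp
    moreover have "w!(t+1) = A" using at[rule_format, of 1] k by simp
    ultimately show False by simp
  qed
  have "uncompletable k (take (length w - 1) w)"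
    by (rule trunc_unc[OF k3 _ _ hF2 nv2 unc]) (use n t1 in auto)
  hence "length w \<le> length (take (length w - 1) w)" by (rule mn)
  moreover have "length (take (length w - 1) w) = length w - 1" by simp
  ultimately show False using n k by linarith
qed



lemma u_let: "occ k w (uw k) s \<Longrightarrow> 1 \<le> k \<Longrightarrow> i < k \<Longrightarrow> w!(s+i) = (if i = 0 then B else A)"
  using occ_u_iff by blast
lemma v_let: "occ k w (vw k) s \<Longrightarrow> 1 \<le> k \<Longrightarrow> i < k \<Longrightarrow> w!(s+i) = (if i = k-1 then A else B)"
  using occ_v_iff by blast

lemma u_let0: "occ k w (uw k) s \<Longrightarrow> 1 \<le> k \<Longrightarrow> w!s = B"
  using u_let[of k w s 0] by simp
lemma u_let1: "occ k w (uw k) s \<Longrightarrow> 1 \<le> i \<Longrightarrow> i < k \<Longrightarrow> w!(s+i) = A"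
  using u_let[of k w s i] by simp
lemma v_let0: "occ k w (vw k) s \<Longrightarrow> i < k - 1 \<Longrightarrow> w!(s+i) = B"
  using v_let[of k w s i] by simp
lemma v_letl: "occ k w (vw k) s \<Longrightarrow> 1 \<le> k \<Longrightarrow> w!(s+(k-1)) = A"
  using v_let[of k w s "k-1"] by simp

lemma uv_let0: "occ_uv k w s \<Longrightarrow> 2 \<le> k \<Longrightarrow> w!s = B"
  unfolding occ_uv_def using u_let0[of k w s] v_let0[of k w s 0] by auto

lemma nKc_I: "i1 < k - 1 \<Longrightarrow> i2 < k - 1 \<Longrightarrow> w!(j+i1) \<noteq> w!(j+i2) \<Longrightarrow> \<not> Kc k w j"
proof
  assume a: "i1 < k - 1" "i2 < k - 1" "w!(j+i1) \<noteq> w!(j+i2)" and "Kc k w j"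
  hence "\<forall>i<k-1. w!(j+i) = w!j" by (simp add: Kc_def)
  hence "w!(j+i1) = w!j" "w!(j+i2) = w!j" using a by auto
  thus False using a by simp
qed

lemma overlap_only:
  assumes k: "4 \<le> k" and os: "occ_uv k w s" and ot: "occ_uv k w t" and st: "s < t" "t < s + k"
  shows "occ k w (vw k) s \<and> occ k w (uw k) t \<and> t = s + k - 2"
proof -
  define d where "d = t - s"
  have d: "1 \<le> d" "d < k" "t = s + d" using st by (auto simp: d_def)
  have wt: "w!t = B" using uv_let0[OF ot] k by simp
  have nu: "\<not> occ k w (uw k) s"
  proof
    assume "occ k w (uw k) s"
    hence "w!(s+d) = A" using u_let1 d by blast
    thus False using wt d by simp
  qed
  hence vs: "occ k w (vw k) s" using os by (simp add: occ_uv_def)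
  have nv: "\<not> occ k w (vw k) t"
  proof
    assume "occ k w (vw k) t"
    moreover have "k-1-d < k-1" using d by simp
    ultimately have "w!(t+(k-1-d)) = B" using v_let0 by blast
    moreover have "t + (k-1-d) = s + (k-1)" using d by simp
    moreover have "w!(s+(k-1)) = A" using v_letl[OF vs] k by simp
    ultimately show False by simp
  qed
  hence ut: "occ k w (uw k) t" using ot by (simp add: occ_uv_def)
  have "d = k - 2"
  proof (rule ccontr)
    assume ne: "d \<noteq> k - 2"
    show False
    proof (cases "d = k - 1")
      case True
      hence "w!(s+(k-1)) = B" using wt d by simp
      thus False using v_letl[OF vs] k by simp
    next
      case False
      hence dd: "d + 1 < k - 1" using ne d by simp
      have "w!(t+1) = A" using u_let1[OF ut, of 1] k by simp
      moreover have "w!(s+(d+1)) = B" using v_let0[OF vs dd] .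
      moreover have "t + 1 = s + (d+1)" using d by simp
      ultimately show False by simp
    qed
  qed
  thus ?thesis using vs ut d by simp
qed

lemma gapfree:
  assumes k: "4 \<le> k" and c: "consecutive k w s t" and r: "s < r" "r < t"
  shows "\<not> occ_uv k w r"
proof
  assume or: "occ_uv k w r"
  have os: "occ_uv k w s" and ot: "occ_uv k w t" and st: "s < t" using c by (auto simp: consecutive_def)
  show False
  proof (cases "overlap k s t")
    case True
    hence "t < s + k" by (simp add: overlap_def)
    hence "t = s + k - 2" "r = s + k - 2" using overlap_only[OF k os ot st] overlap_only[OF k os or r(1)] r by auto
    thus False using r by simp
  next
    case False
    hence "\<forall>r. occ_uv k w r \<and> s \<le> r \<and> r + k \<le> t + k \<longrightarrow> r = s \<or> r = t" using c by (simp add: consecutive_def)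
    thus False using or r by fastforce
  qed
qed

definition lst :: "nat \<Rightarrow> nat \<Rightarrow> nat \<Rightarrow> nat" where
  "lst k t j = j + ((t + k - 1 - j) div k) * k"

lemma lst_props:
  assumes "1 \<le> k" "j \<le> t + k - 1"
  shows "t \<le> lst k t j" "lst k t j < t + k" "lst k t j mod k = j mod k" "lst k t j = j + ((t + k - 1 - j) div k) * k"
proof -
  define D where "D = t + k - 1 - j"
  have e1: "(D div k) * k + D mod k = D" by (rule div_mult_mod_eq)
  have e2: "j + D = t + k - 1" using assms by (simp add: D_def)
  have l: "lst k t j = j + (D div k) * k" by (simp add: lst_def D_def)
  have m: "D mod k < k" using assms by simp
  have e: "lst k t j + D mod k = t + k - 1" using l e1 e2 by linarith
  show "t \<le> lst k t j" using e m by linarith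
  show "lst k t j < t + k" using e assms by linarith
  show "lst k t j mod k = j mod k" unfolding lst_def by simp
  show "lst k t j = j + ((t + k - 1 - j) div k) * k" by (simp add: lst_def)
qed

lemma same_res:
  fixes x y a k :: nat
  assumes "a \<le> x" "x < a + k" "a \<le> y" "y < a + k" "x mod k = y mod k"
  shows "x = y"
proof (rule ccontr)
  assume "x \<noteq> y"
  then consider "x < y" | "y < x" using linorder_neqE_nat by blast
  thus False
  proof cases
    case 1
    have "k dvd (y - x)" using mod_eq_dvd_iff_nat[of x y k] assms(5) 1 by auto
    moreover have "0 < y - x" using 1 by simp
    ultimately have "k \<le> y - x" by (rule dvd_imp_le)
    thus False using assms 1 by linarith
  next
    case 2
    have "k dvd (x - y)" using mod_eq_dvd_iff_nat[of y x k] assms(5) 2 by auto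
    moreover have "0 < x - y" using 2 by simp
    ultimately have "k \<le> x - y" by (rule dvd_imp_le)
    thus False using assms 2 by linarith
  qed
qed

lemma chain:
  assumes k: "2 \<le> k" and gap: "\<forall>r. s < r \<and> r < t \<longrightarrow> \<not> occ_uv k w r"
    and "s < j"
  shows "j + q * k < t + k \<Longrightarrow> forbidden k w j \<Longrightarrow> forbidden k w (j + q * k)"
proof (induction q)
  case 0 thus ?case by simp
next
  case (Suc q)
  have "j + q * k < t" using Suc.prems by simp
  hence "\<not> occ_uv k w (j + q*k)" using gap \<open>s < j\<close> by auto
  moreover have "forbidden k w (j + q*k)" using Suc by simp
  ultimately have "forbidden k w (j + q*k + k)" using F_step[OF k] by blast
  thus ?case by (simp add: algebra_simps)
qed

lemma F_lst:
  assumes k: "2 \<le> k" and gap: "\<forall>r. s < r \<and> r < t \<longrightarrow> \<not> occ_uv k w r"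
    and sj: "s < j" and jt: "j < t + k" and Fj: "forbidden k w j"
  shows "forbidden k w (lst k t j)"
proof -
  have l: "lst k t j = j + ((t + k - 1 - j) div k) * k" "lst k t j < t + k"
    using lst_props[of k j t] k jt by auto
  have "forbidden k w (j + ((t + k - 1 - j) div k) * k)"
    by (rule chain[OF k gap sj]) (use l Fj in auto)
  thus ?thesis using l by simp
qed



lemma Floc_fin: "finite (Floc k w s)"
  by (rule finite_subset[of _ "{..<k}"]) (auto simp: Floc_def)

lemma Floc_mem: "i \<in> Floc k w s \<longleftrightarrow> i < k \<and> forbidden k w (s+i)"
  by (simp add: Floc_def)

lemma v_after:
  assumes k: "4 \<le> k" and vs: "occ k w (vw k) s" and st: "s + k \<le> t"
    and gap: "\<forall>r. s < r \<and> r < t \<longrightarrow> \<not> occ_uv k w r"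
    and i: "1 \<le> i" "i < k" and F: "forbidden k w (s+i)"
  shows "forbidden k w (s+i+k-1) \<and> forbidden k w (s+i+k)"
proof -
  have k2: "2 \<le> k" using k by simp
  have len: "s + i + k \<le> length w" using F_len[OF k2 F] .
  have nu: "\<not> occ_uv k w (s+i)" using gap i st by auto
  have nK: "\<not> Kc k w (s+i)"
  proof (cases "i \<le> k - 2")
    case True
    have "w!(s+i+0) = B" using v_let0[OF vs, of i] True k by simp
    moreover have "w!(s+i+(k-1-i)) = A" using v_letl[OF vs] i k by simp
    ultimately show ?thesis using nKc_I[of 0 k "k-1-i" w "s+i"] True i k by auto
  next
    case False
    hence ik: "i = k - 1" using i by simp
    show ?thesis
    proof
      assume "Kc k w (s+i)"
      hence kk: "\<forall>i'<k-1. w!(s+i+i') = w!(s+i)" by (simp add: Kc_def)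
      have wa: "w!(s+i) = A" using v_letl[OF vs] ik k by simp
      have k1: "1 \<le> k" using k by simp
      have "occ k w (uw k) (s+k-2)"
        unfolding occ_u_iff[OF k1]
      proof (intro conjI allI impI)
        show "s + k - 2 + k \<le> length w" using len ik by simp
        fix i' assume i': "i' < k"
        show "w!(s+k-2+i') = (if i' = 0 then B else A)"
        proof (cases "i' = 0")
          case True
          thus ?thesis using v_let0[OF vs, of "k-2"] k by simp
        next
          case False
          hence "s+k-2+i' = s+i+(i'-1)" using ik k by simp
          moreover have "w!(s+i+(i'-1)) = w!(s+i)" by (rule kk[rule_format]) (use i' False in simp)
          moreover note wa
          ultimately show ?thesis using False by simp
        qed
      qed
      moreover have "s < s + k - 2" "s + k - 2 < t" using k st by auto
      ultimately show False using gap by (auto simp: occ_uv_def)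
    qed
  qed
  show ?thesis using F_free[OF k2 nu nK] F by simp
qed

lemma Floc_t_nonempty:
  assumes k: "4 \<le> k" and mu: "min_uncompletable k w" and ot: "occ_uv k w t"
  shows "Floc k w t \<noteq> {}"
proof
  assume e: "Floc k w t = {}"
  show False
  proof (cases "occ k w (vw k) t")
    case True
    hence "forbidden k w (t+0)" using F_v k by simp
    hence "0 \<in> Floc k w t" unfolding Floc_def using k by simp
    thus False using e by simp
  next
    case False
    hence "occ k w (uw k) t" using ot by (simp add: occ_uv_def)
    moreover have "\<forall>i<k. \<not> forbidden k w (t+i)" using e by (auto simp: Floc_def)
    ultimately show False using minM[OF k mu] by blast
  qed
qed

lemma caseA2:
  assumes k: "4 \<le> k" and mu: "min_uncompletable k w" and vs: "occ k w (vw k) s"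
    and ot: "occ_uv k w t" and st: "s + k \<le> t"
    and gap: "\<forall>r. s < r \<and> r < t \<longrightarrow> \<not> occ_uv k w r"
    and cd: "card (Floc k w t) < card (Floc k w s)"
  shows False
proof -
  have k2: "2 \<le> k" using k by simp
  define P where "P = Floc k w s - {0}"
  show False
  proof (cases "P = {}")
    case True
    hence "Floc k w s \<subseteq> {0}" by (auto simp: P_def)
    hence "card (Floc k w s) \<le> card {0::nat}" by (rule card_mono[rotated]) simp
    hence "card (Floc k w s) \<le> 1" by simp
    hence "card (Floc k w t) = 0" using cd by simp
    hence "Floc k w t = {}" using Floc_fin by simp
    thus False using Floc_t_nonempty[OF k mu ot] by simp
  next
    case False
    define i0 where "i0 = Min P"
    have finP: "finite P" using Floc_fin by (simp add: P_def)
    have i0P: "i0 \<in> P" using Min_in[OF finP False] by (simp add: i0_def)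
    have i0min: "\<And>i. i \<in> P \<Longrightarrow> i0 \<le> i" using Min_le[OF finP] by (simp add: i0_def)
    have i0r: "1 \<le> i0" "i0 < k" "forbidden k w (s+i0)" using i0P by (auto simp: P_def Floc_def)
    define e where "e = (\<lambda>i. if i = 0 then i0 - 1 else i)"
    define h where "h = (\<lambda>i. lst k t (s + k + e i) - t)"
    have ek: "\<And>i. i < k \<Longrightarrow> e i < k" using i0r by (auto simp: e_def)
    have Fe: "\<And>i. i \<in> Floc k w s \<Longrightarrow> forbidden k w (s + k + e i)"
    proof -
      fix i assume iF: "i \<in> Floc k w s"
      show "forbidden k w (s + k + e i)"
      proof (cases "i = 0")
        case True
        have "forbidden k w (s+i0+k-1)" using v_after[OF k vs st gap i0r(1,2,3)] by simp
        moreover have "s+i0+k-1 = s + k + e i" using True i0r by (simp add: e_def)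
        ultimately show ?thesis by simp
      next
        case False
        have "i < k" "forbidden k w (s+i)" using iF by (auto simp: Floc_def)
        hence "forbidden k w (s+i+k)" using v_after[OF k vs st gap] False by simp
        thus ?thesis using False by (simp add: e_def add.commute add.left_commute)
      qed
    qed
    have hmap: "h ` Floc k w s \<subseteq> Floc k w t"
    proof
      fix x assume "x \<in> h ` Floc k w s"
      then obtain i where iF: "i \<in> Floc k w s" and x: "x = h i" by blast
      have ik: "i < k" using iF by (simp add: Floc_def)
      have j1: "s < s + k + e i" "s + k + e i < t + k" using ek[OF ik] st k by auto
      have F1: "forbidden k w (lst k t (s + k + e i))" using F_lst[OF k2 gap j1 Fe[OF iF]] .
      have "t \<le> lst k t (s + k + e i)" "lst k t (s + k + e i) < t + k" using lst_props[of k "s+k+e i" t] j1 k by auto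
      thus "x \<in> Floc k w t" using F1 x by (auto simp: h_def Floc_def)
    qed
    have inj: "inj_on h (Floc k w s)"
    proof
      fix i i' assume iF: "i \<in> Floc k w s" and iF': "i' \<in> Floc k w s" and hh: "h i = h i'"
      have ik: "i < k" "i' < k" using iF iF' by (auto simp: Floc_def)
      have j1: "s + k + e i \<le> t + k - 1" "s + k + e i' \<le> t + k - 1" using ek[OF ik(1)] ek[OF ik(2)] st by auto
      have "t \<le> lst k t (s + k + e i)" "t \<le> lst k t (s + k + e i')"
        using lst_props(1)[of k "s+k+e i" t] lst_props(1)[of k "s+k+e i'" t] j1 k by auto
      hence "lst k t (s + k + e i) = lst k t (s + k + e i')" using hh by (simp add: h_def)
      moreover have "lst k t (s + k + e i) mod k = (s + k + e i) mod k" by (rule lst_props(3)) (use j1 k in auto)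
      moreover have "lst k t (s + k + e i') mod k = (s + k + e i') mod k" by (rule lst_props(3)) (use j1 k in auto)
      ultimately have "(s + k + e i) mod k = (s + k + e i') mod k" by simp
      hence ee: "e i = e i'" using same_res[of "s+k" "s+k+e i" k "s+k+e i'"] ek[OF ik(1)] ek[OF ik(2)] by simp
      show "i = i'"
      proof (rule ccontr)
        assume ne: "i \<noteq> i'"
        show False
        proof (cases "i = 0")
          case True
          hence "i' \<noteq> 0" using ne by simp
          hence "i' = i0 - 1" "i' \<in> P" using ee iF' True by (auto simp: e_def P_def)
          moreover have "i0 \<le> i'" using i0min calculation(2) .
          ultimately show False using i0r by simp
        next
          case False
          show False
          proof (cases "i' = 0")
            case True
            hence "i = i0 - 1" "i \<in> P" using ee iF False by (auto simp: e_def P_def)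
            moreover have "i0 \<le> i" using i0min calculation(2) .
            ultimately show False using i0r by simp
          next
            case False
            thus False using ee ne \<open>i \<noteq> 0\<close> by (simp add: e_def)
          qed
        qed
      qed
    qed
    have "card (Floc k w s) \<le> card (Floc k w t)"
      using card_inj_on_le[OF inj hmap Floc_fin] .
    thus False using cd by simp
  qed
qed


lemma caseA1:
  assumes k: "4 \<le> k" and mu: "min_uncompletable k w" and vs: "occ k w (vw k) s"
    and ut: "occ k w (uw k) t" and ts: "t = s + k - 2"
    and gap: "\<forall>r. s < r \<and> r < t \<longrightarrow> \<not> occ_uv k w r"
    and cd: "card (Floc k w t) < card (Floc k w s)"
  shows "Floc k w s = {0, k-1} \<and> Floc k w t = {1}"
proof -
  have k2: "2 \<le> k" and k3: "3 \<le> k" using k by auto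
  have F0: "forbidden k w s" using F_v[OF k2 vs] .
  have mid: "\<And>i. 1 \<le> i \<Longrightarrow> i \<le> k - 3 \<Longrightarrow> forbidden k w (s+i) \<Longrightarrow> forbidden k w (t+i+1) \<and> forbidden k w (t+i+2)"
  proof -
    fix i assume i: "1 \<le> i" "i \<le> k - 3" and F: "forbidden k w (s+i)"
    have nu: "\<not> occ_uv k w (s+i)" using gap i ts k by auto
    have "w!(s+i+0) = B" using v_let0[OF vs, of i] i k by simp
    moreover have "w!(s+i+(k-1-i)) = A" using v_letl[OF vs] i k by simp
    ultimately have nK: "\<not> Kc k w (s+i)" using nKc_I[of 0 k "k-1-i" w "s+i"] i k by auto
    have "forbidden k w (s+i+k-1) \<and> forbidden k w (s+i+k)" using F_free[OF k2 nu nK] F by simp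
    moreover have "s+i+k-1 = t+i+1" "s+i+k = t+i+2" using ts k by auto
    ultimately show "forbidden k w (t+i+1) \<and> forbidden k w (t+i+2)" by simp
  qed
  have Fu: "forbidden k w t \<longleftrightarrow> forbidden k w (t+k-1)" using F_u[OF k3 ut] .
  have sk2: "s + (k-2) = t" and sk1: "s + (k-1) = t + 1" using ts k by auto
  define X where "X = {m. 2 \<le> m \<and> m < k \<and> forbidden k w (t+m)}"
  have Xe: "X = {}"
  proof (rule ccontr)
    assume ne: "X \<noteq> {}"
    have finX: "finite X" by (rule finite_subset[of _ "{..<k}"]) (auto simp: X_def)
    define m0 where "m0 = Min X"
    have m0X: "m0 \<in> X" using Min_in[OF finX ne] by (simp add: m0_def)
    have m0min: "\<And>m. m \<in> X \<Longrightarrow> m0 \<le> m" using Min_le[OF finX] by (simp add: m0_def)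
    define h where "h = (\<lambda>i. if i = 0 then m0 else if i = k-2 then 0 else if i = k-1 then 1 else i+2)"
    have hmap: "h ` Floc k w s \<subseteq> Floc k w t"
    proof
      fix x assume "x \<in> h ` Floc k w s"
      then obtain i where iF: "i < k" "forbidden k w (s+i)" and x: "x = h i" by (auto simp: Floc_def)
      show "x \<in> Floc k w t"
      proof (cases "i = 0")
        case True thus ?thesis using m0X x by (simp add: h_def X_def Floc_def)
      next
        case n0: False
        show ?thesis
        proof (cases "i = k-2")
          case True thus ?thesis using iF x sk2 n0 k by (simp add: h_def Floc_def)
        next
          case n2: False
          show ?thesis
          proof (cases "i = k-1")
            case True thus ?thesis using iF x sk1 n0 n2 k by (simp add: h_def Floc_def)
          next
            case n3: False
            hence "1 \<le> i" "i \<le> k - 3" using n0 n2 iF by auto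
            hence "forbidden k w (t+i+2)" "i + 2 < k" using mid iF k by auto
            thus ?thesis using x n0 n2 n3 by (simp add: h_def Floc_def add.assoc)
          qed
        qed
      qed
    qed
    have inj: "inj_on h (Floc k w s)"
    proof
      fix i j assume iF: "i \<in> Floc k w s" and jF: "j \<in> Floc k w s" and hh: "h i = h j"
      have bound: "\<And>i. i \<in> Floc k w s \<Longrightarrow> i \<noteq> 0 \<Longrightarrow> i \<noteq> k-2 \<Longrightarrow> i \<noteq> k-1 \<Longrightarrow> m0 < i + 2"
      proof -
        fix i assume iF: "i \<in> Floc k w s" "i \<noteq> 0" "i \<noteq> k-2" "i \<noteq> k-1"
        hence "1 \<le> i" "i \<le> k - 3" "forbidden k w (s+i)" by (auto simp: Floc_def)
        hence "forbidden k w (t+i+1)" using mid by blast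
        hence "i+1 \<in> X" using \<open>1 \<le> i\<close> \<open>i \<le> k - 3\<close> k by (simp add: X_def add.assoc)
        thus "m0 < i + 2" using m0min by fastforce
      qed
      have m02: "2 \<le> m0" using m0X by (simp add: X_def)
      have cls: "\<And>i. i \<in> Floc k w s \<Longrightarrow> (i = 0 \<and> h i = m0) \<or> (i = k-2 \<and> h i = 0) \<or> (i = k-1 \<and> h i = 1) \<or> (h i = i + 2 \<and> m0 < i + 2)"
      proof -
        fix i assume iF: "i \<in> Floc k w s"
        show "(i = 0 \<and> h i = m0) \<or> (i = k-2 \<and> h i = 0) \<or> (i = k-1 \<and> h i = 1) \<or> (h i = i + 2 \<and> m0 < i + 2)"
        proof (cases "i = 0")
          case True thus ?thesis by (simp add: h_def)
        next
          case n0: False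
          show ?thesis
          proof (cases "i = k-2")
            case True thus ?thesis using n0 by (simp add: h_def)
          next
            case n2: False
            show ?thesis
            proof (cases "i = k-1")
              case True thus ?thesis using n0 n2 by (simp add: h_def)
            next
              case n3: False
              thus ?thesis using n0 n2 bound[OF iF n0 n2 n3] by (simp add: h_def)
            qed
          qed
        qed
      qed
      have d: "k - 2 \<noteq> 0" "k - 1 \<noteq> 0" "k - 2 \<noteq> k - 1" using k by auto
      show "i = j"
      proof -
        from cls[OF iF] cls[OF jF] hh m02 d show ?thesis by fastforce
      qed
    qed
    have "card (Floc k w s) \<le> card (Floc k w t)" using card_inj_on_le[OF inj hmap Floc_fin] .
    thus False using cd by simp
  qed
  have nFt: "\<not> forbidden k w t"
  proof
    assume "forbidden k w t"
    hence "forbidden k w (t + (k-1))" using Fu k by simp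
    hence "k - 1 \<in> X" using k by (simp add: X_def)
    thus False using Xe by simp
  qed
  have nmid: "\<And>i. 1 \<le> i \<Longrightarrow> i \<le> k - 3 \<Longrightarrow> \<not> forbidden k w (s+i)"
  proof
    fix i assume i: "1 \<le> i" "i \<le> k - 3" "forbidden k w (s+i)"
    hence "forbidden k w (t+(i+2))" using mid by (simp add: add.assoc)
    hence "i + 2 \<in> X" using i k by (simp add: X_def)
    thus False using Xe by simp
  qed
  have nX: "\<And>m. 2 \<le> m \<Longrightarrow> m < k \<Longrightarrow> \<not> forbidden k w (t+m)" using Xe by (auto simp: X_def)
  have Ft1: "forbidden k w (t+1)"
  proof (rule ccontr)
    assume n1: "\<not> forbidden k w (t+1)"
    have "\<forall>i<k. \<not> forbidden k w (t+i)"
    proof (intro allI impI)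
      fix i assume "i < k"
      show "\<not> forbidden k w (t+i)"
      proof (cases "i = 0")
        case True thus ?thesis using nFt by simp
      next
        case False
        show ?thesis
        proof (cases "i = 1")
          case True thus ?thesis using n1 by simp
        next
          case False
          thus ?thesis using nX[of i] \<open>i < k\<close> \<open>i \<noteq> 0\<close> by simp
        qed
      qed
    qed
    thus False using minM[OF k mu ut] by blast
  qed
  have s_eq: "Floc k w s = {0, k-1}"
  proof (rule set_eqI)
    fix i show "i \<in> Floc k w s \<longleftrightarrow> i \<in> {0, k-1}"
    proof (cases "i = 0 \<or> i = k - 1")
      case True thus ?thesis using F0 Ft1 sk1 k by (auto simp: Floc_def)
    next
      case False
      hence "i = k - 2 \<or> (1 \<le> i \<and> i \<le> k-3) \<or> k \<le> i" by auto
      hence "\<not> (i < k \<and> forbidden k w (s+i))" using nmid nFt sk2 by auto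
      thus ?thesis using False by (auto simp: Floc_def)
    qed
  qed
  have t_eq: "Floc k w t = {1}"
  proof (rule set_eqI)
    fix i show "i \<in> Floc k w t \<longleftrightarrow> i \<in> {1}"
    proof (cases "i = 1")
      case True thus ?thesis using Ft1 k by (auto simp: Floc_def)
    next
      case False
      hence "i = 0 \<or> (2 \<le> i \<and> i < k) \<or> k \<le> i" by auto
      hence "\<not> (i < k \<and> forbidden k w (t+i))" using nX nFt by auto
      thus ?thesis using False by (auto simp: Floc_def)
    qed
  qed
  show ?thesis using s_eq t_eq by simp
qed



lemma modsub:
  fixes D k i :: nat
  assumes "k \<le> D" "i < k"
  shows "(D - i) mod k = (if i \<le> D mod k then D mod k - i else k + D mod k - i)"
proof -
  define q where "q = D div k"
  define d where "d = D mod k"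
  have Dq: "D = q * k + d" by (simp add: q_def d_def)
  have k0: "0 < k" using assms by simp
  have dk: "d < k" using k0 by (simp add: d_def)
  have q1: "1 \<le> q"
  proof (rule ccontr)
    assume "\<not> 1 \<le> q" hence "q = 0" by simp
    thus False using Dq dk assms by simp
  qed
  show ?thesis
  proof (cases "i \<le> d")
    case True
    have "D - i = (d - i) + q * k" using Dq True by simp
    hence "(D - i) mod k = (d - i) mod k" by simp
    also have "\<dots> = d - i" using dk by simp
    finally show ?thesis using True by (simp add: d_def)
  next
    case False
    obtain q' where q': "q = Suc q'" using q1 by (cases q) auto
    have "D = (k + d) + q' * k" using Dq q' by simp
    hence "D - i = (k + d - i) + q' * k" using False assms by simp
    hence "(D - i) mod k = (k + d - i) mod k" by simp
    also have "\<dots> = k + d - i" using False assms by simp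
    finally show ?thesis using False by (simp add: d_def)
  qed
qed


lemma modadd:
  fixes D k i :: nat
  assumes "i < k"
  shows "(D + i) mod k = (if D mod k + i < k then D mod k + i else D mod k + i - k)"
proof -
  have e: "(D + i) mod k = (D mod k + i) mod k" by (simp add: mod_add_left_eq)
  have dk: "D mod k < k" using assms by simp
  show ?thesis
  proof (cases "D mod k + i < k")
    case True thus ?thesis using e by simp
  next
    case False
    hence "(D mod k + i) mod k = (D mod k + i - k) mod k" by (simp add: le_mod_geq)
    also have "\<dots> = D mod k + i - k" using dk assms by (intro mod_less) linarith
    finally show ?thesis using e False by simp
  qed
qed

lemma B_common:
  assumes k: "4 \<le> k" and us: "occ k w (uw k) s" and ot: "occ_uv k w t" and st: "s + k \<le> t"
    and gap: "\<forall>r. s < r \<and> r < t \<longrightarrow> \<not> occ_uv k w r"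
    and cd: "card (Floc k w t) < card (Floc k w s)"
  shows "forbidden k w (s+k-1)"
    and "\<And>j. s < j \<Longrightarrow> j < t + k \<Longrightarrow> forbidden k w j \<longleftrightarrow> (j - s) mod k \<noteq> 0 \<and> forbidden k w (s + (j - s) mod k)"
proof -
  have k2: "2 \<le> k" and k3: "3 \<le> k" and k1: "1 \<le> k" using k by auto
  define psi where "psi = (\<lambda>i. lst k t (s+i) - t)"
  have lb: "\<And>i. i < k \<Longrightarrow> s + i \<le> t + k - 1" using st by simp
  have pl: "\<And>i. i < k \<Longrightarrow> t \<le> lst k t (s+i) \<and> lst k t (s+i) < t + k \<and> lst k t (s+i) mod k = (s+i) mod k"
    using lst_props(1-3)[OF k1 lb] by blast
  have injk: "inj_on psi {..<k}"
  proof
    fix i j assume i: "i \<in> {..<k}" and j: "j \<in> {..<k}" and h: "psi i = psi j"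
    have "lst k t (s+i) - t = lst k t (s+j) - t" using h by (simp add: psi_def)
    moreover have "t \<le> lst k t (s+i)" "t \<le> lst k t (s+j)" using pl[of i] pl[of j] i j by auto
    ultimately have "lst k t (s+i) = lst k t (s+j)" by linarith
    hence "(s+i) mod k = (s+j) mod k" using pl[of i] pl[of j] i j by simp
    thus "i = j" using same_res[of s "s+i" k "s+j"] i j by simp
  qed
  define P where "P = Floc k w s - {0}"
  have Pk: "P \<subseteq> {..<k}" by (auto simp: P_def Floc_def)
  have Pmap: "psi ` P \<subseteq> Floc k w t"
  proof
    fix x assume "x \<in> psi ` P"
    then obtain i where i: "i \<in> P" and x: "x = psi i" by blast
    have i1: "0 < i" "i < k" "forbidden k w (s+i)" using i by (auto simp: P_def Floc_def)
    have "forbidden k w (lst k t (s+i))" using F_lst[OF k2 gap _ _ i1(3)] i1 st by simp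
    thus "x \<in> Floc k w t" using pl[OF i1(2)] x by (auto simp: psi_def Floc_def)
  qed
  have injP: "inj_on psi P" using inj_on_subset[OF injk Pk] .
  show Fsk: "forbidden k w (s+k-1)"
  proof (rule ccontr)
    assume n: "\<not> forbidden k w (s+k-1)"
    hence "\<not> forbidden k w s" using F_u[OF k3 us] by simp
    hence "Floc k w s = P" by (auto simp: P_def Floc_def)
    hence "card (Floc k w s) \<le> card (Floc k w t)" using card_inj_on_le[OF injP Pmap Floc_fin] by simp
    thus False using cd by simp
  qed
  have Fs: "forbidden k w s" using F_u[OF k3 us] Fsk by simp
  have n0: "\<not> forbidden k w (lst k t s)"
  proof
    assume F0: "forbidden k w (lst k t s)"
    have mp: "psi ` Floc k w s \<subseteq> Floc k w t"
    proof
      fix x assume "x \<in> psi ` Floc k w s"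
      then obtain i where i: "i \<in> Floc k w s" and x: "x = psi i" by blast
      show "x \<in> Floc k w t"
      proof (cases "i = 0")
        case True
        have "t \<le> lst k t s" "lst k t s < t + k" using pl[of 0] k by auto
        hence "lst k t s - t < k" "t + (lst k t s - t) = lst k t s" by linarith+
        thus ?thesis using F0 True x by (simp add: psi_def Floc_def)
      next
        case False thus ?thesis using i x Pmap by (auto simp: P_def)
      qed
    qed
    have "Floc k w s \<subseteq> {..<k}" by (auto simp: Floc_def)
    hence ij: "inj_on psi (Floc k w s)" using inj_on_subset[OF injk] by blast
    have "card (Floc k w s) \<le> card (Floc k w t)" using card_inj_on_le[OF ij mp Floc_fin] .
    thus False using cd by simp
  qed
  have "0 \<in> Floc k w s" using Fs k by (simp add: Floc_def)
  hence cP: "card P = card (Floc k w s) - 1" unfolding P_def by (rule card_Diff_singleton)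
  have eqP: "psi ` P = Floc k w t"
  proof (rule card_seteq[OF Floc_fin Pmap])
    have "card (psi ` P) = card P" using card_image[OF injP] .
    thus "card (Floc k w t) \<le> card (psi ` P)" using cP cd by simp
  qed
  show "\<And>j. s < j \<Longrightarrow> j < t + k \<Longrightarrow> forbidden k w j \<longleftrightarrow> (j - s) mod k \<noteq> 0 \<and> forbidden k w (s + (j - s) mod k)"
  proof -
    fix j assume sj: "s < j" and jt: "j < t + k"
    define r where "r = (j - s) mod k"
    have rk: "r < k" using k by (simp add: r_def)
    have lj: "t \<le> lst k t j" "lst k t j < t + k" "lst k t j mod k = j mod k"
      using lst_props(1-3)[OF k1, of j t] jt by auto
    have rm: "(s + r) mod k = j mod k"
    proof -
      have "(s + r) mod k = (s + (j - s)) mod k" by (simp add: r_def mod_add_right_eq)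
      thus ?thesis using sj by simp
    qed
    have leq: "lst k t j = lst k t (s + r)"
    proof (rule same_res[of t])
      show "t \<le> lst k t j" "lst k t j < t + k" using lj by auto
      show "t \<le> lst k t (s + r)" "lst k t (s + r) < t + k" using pl[OF rk] by auto
      show "lst k t j mod k = lst k t (s + r) mod k" using lj(3) pl[OF rk] rm by simp
    qed
    show "forbidden k w j \<longleftrightarrow> r \<noteq> 0 \<and> forbidden k w (s + r)" unfolding r_def[symmetric]
    proof
      assume Fj: "forbidden k w j"
      have Fl: "forbidden k w (lst k t (s+r))" using F_lst[OF k2 gap sj jt Fj] leq by simp
      have rn: "r \<noteq> 0"
      proof
        assume "r = 0"
        hence "forbidden k w (lst k t s)" using Fl by simp
        thus False using n0 by simp
      qed
      have "t \<le> lst k t (s+r)" "lst k t (s+r) < t + k" using pl[OF rk] by auto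
      hence "psi r < k" "t + psi r = lst k t (s+r)" unfolding psi_def by linarith+
      hence "psi r \<in> Floc k w t" using Fl by (simp add: Floc_def)
      hence "psi r \<in> psi ` P" using eqP by simp
      then obtain i where i: "i \<in> P" "psi r = psi i" by blast
      have "i \<in> {..<k}" "r \<in> {..<k}" using i(1) Pk rk by auto
      hence "i = r" using inj_onD[OF injk i(2)[symmetric]] by simp
      thus "r \<noteq> 0 \<and> forbidden k w (s + r)" using i rn by (simp add: P_def Floc_def)
    next
      assume a: "r \<noteq> 0 \<and> forbidden k w (s + r)"
      define q where "q = (j - s) div k"
      have "q * k + r = j - s" by (simp add: q_def r_def)
      hence jq: "j = s + r + q * k" using sj by linarith
      have sr: "s < s + r" using a by simp
      have "forbidden k w (s + r + q * k)" using chain[OF k2 gap sr, of q] a jq jt by simp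
      thus "forbidden k w j" using jq by simp
    qed
  qed
qed



lemma modkm1:
  fixes x k :: nat
  assumes "1 \<le> x mod k" and k: "0 < k"
  shows "(x + (k - 1)) mod k = x mod k - 1"
proof -
  have "x mod k < k" using k by simp
  hence "\<not> x mod k + (k - 1) < k" using assms by linarith
  hence "(x + (k - 1)) mod k = x mod k + (k-1) - k" using modadd[of "k-1" k x] k by simp
  thus ?thesis using assms by simp
qed

lemma clos:
  assumes k: "4 \<le> k" and gap: "\<forall>r. s < r \<and> r < t \<longrightarrow> \<not> occ_uv k w r"
    and per: "\<And>j. s < j \<Longrightarrow> j < t + k \<Longrightarrow> forbidden k w j \<longleftrightarrow> (j - s) mod k \<noteq> 0 \<and> forbidden k w (s + (j - s) mod k)"
    and sj: "s < j" and jt: "j < t" and nK: "\<not> Kc k w j" and r: "(j - s) mod k = r"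
    and r1: "1 \<le> r" and fr: "forbidden k w (s + r)"
  shows "2 \<le> r \<and> forbidden k w (s + (r - 1))"
proof -
  have k2: "2 \<le> k" using k by simp
  have p: "forbidden k w j \<longleftrightarrow> (j - s) mod k \<noteq> 0 \<and> forbidden k w (s + (j - s) mod k)"
    by (rule per[OF sj]) (use jt in simp)
  have Fj: "forbidden k w j" unfolding p r using fr r1 by simp
  have F1: "forbidden k w (j + k - 1)" using F_step1[OF k2 Fj nK] .
  have e: "j + k - 1 - s = (j - s) + (k - 1)" using sj k by simp
  have m: "(j + k - 1 - s) mod k = r - 1" unfolding e using modkm1[of "j - s" k] r r1 k by simp
  have "s < j + k - 1" "j + k - 1 < t + k" using sj jt k by auto
  hence "forbidden k w (j+k-1) \<longleftrightarrow> (j + k - 1 - s) mod k \<noteq> 0 \<and> forbidden k w (s + (j + k - 1 - s) mod k)"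
    by (rule per)
  hence X: "(j + k - 1 - s) mod k \<noteq> 0 \<and> forbidden k w (s + (j + k - 1 - s) mod k)" using F1 by blast
  show ?thesis using X unfolding m by auto
qed

lemma caseB1:
  assumes k: "4 \<le> k" and us: "occ k w (uw k) s" and ut: "occ k w (uw k) t" and st: "s + k \<le> t"
    and gap: "\<forall>r. s < r \<and> r < t \<longrightarrow> \<not> occ_uv k w r"
    and cd: "card (Floc k w t) < card (Floc k w s)"
  shows "\<exists>j. 1 \<le> j \<and> j \<le> k - 2 \<and> Floc k w s = {0} \<union> {k - j..k - 1} \<and> Floc k w t = {1..j}"
proof -
  have k1: "1 \<le> k" and k2: "2 \<le> k" and k3: "3 \<le> k" using k by auto
  have ot: "occ_uv k w t" using ut by (simp add: occ_uv_def)
  note BC = B_common[OF k us ot st gap cd]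
  have Fsk: "forbidden k w (s+k-1)" using BC(1) .
  have per: "\<And>j. s < j \<Longrightarrow> j < t + k \<Longrightarrow> forbidden k w j \<longleftrightarrow> (j - s) mod k \<noteq> 0 \<and> forbidden k w (s + (j - s) mod k)"
    using BC(2) by blast
  have perI: "\<And>j x. s < j \<Longrightarrow> j < t + k \<Longrightarrow> (j - s) mod k = x \<Longrightarrow> forbidden k w j \<longleftrightarrow> x \<noteq> 0 \<and> forbidden k w (s + x)"
  proof -
    fix j x assume a: "s < j" "j < t + k" "(j - s) mod k = x"
    have "forbidden k w j \<longleftrightarrow> (j - s) mod k \<noteq> 0 \<and> forbidden k w (s + (j - s) mod k)" by (rule per) (use a in auto)
    thus "forbidden k w j \<longleftrightarrow> x \<noteq> 0 \<and> forbidden k w (s + x)" using a(3) by simp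
  qed
  define D where "D = t - s"
  define d where "d = D mod k"
  have Dk: "k \<le> D" using st by (simp add: D_def)
  have dk: "d < k" using k by (simp add: d_def)
  have wt: "w!t = B" using u_let0[OF ut k1] .
  have wt1: "w!(t+1) = A" using u_let1[OF ut, of 1] k by simp
  have nK: "\<And>i. 1 \<le> i \<Longrightarrow> i \<le> k - 2 \<Longrightarrow> \<not> Kc k w (t - i)"
  proof -
    fix i assume i: "1 \<le> i" "i \<le> k - 2"
    have ti: "i \<le> t" using i st by simp
    show "\<not> Kc k w (t - i)"
    proof (cases "i \<le> k - 3")
      case True
      have "w!(t - i + i) = B" using wt ti by simp
      moreover have "w!(t - i + (i+1)) = A" using wt1 ti by simp
      ultimately show ?thesis using nKc_I[of i k "i+1" w "t-i"] True i k by auto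
    next
      case False
      hence ik: "i = k - 2" using i by simp
      show ?thesis
      proof
        assume Kc: "Kc k w (t - i)"
        hence kk: "\<forall>i'<k-1. w!(t-i+i') = w!(t-i)" by (simp add: Kc_def)
        have "w!(t-i+i) = w!(t-i)" by (rule kk[rule_format]) (use ik k in simp)
        hence wB: "w!(t-i) = B" using wt ti by simp
        have "occ k w (vw k) (t - i)"
          unfolding occ_v_iff[OF k1]
        proof (intro conjI allI impI)
          show "t - i + k \<le> length w" using occ_len[OF ut] ik ti by simp
          fix i' assume i': "i' < k"
          show "w!(t-i+i') = (if i' = k-1 then A else B)"
          proof (cases "i' = k - 1")
            case True
            hence "t - i + i' = t + 1" using ik ti k by simp
            thus ?thesis using wt1 True by simp
          next
            case False
            hence "w!(t-i+i') = w!(t-i)" using kk i' by simp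
            thus ?thesis using wB False by simp
          qed
        qed
        moreover have "s < t - i" "t - i < t" using ik st k by auto
        ultimately show False using gap by (auto simp: occ_uv_def)
      qed
    qed
  qed
  have Cl: "\<And>r. 1 \<le> r \<Longrightarrow> r < k \<Longrightarrow> r \<noteq> d \<Longrightarrow> r \<noteq> d + 1 \<Longrightarrow> forbidden k w (s + r) \<Longrightarrow> 2 \<le> r \<and> forbidden k w (s + (r - 1))"
  proof -
    fix r assume r: "1 \<le> r" "r < k" "r \<noteq> d" "r \<noteq> d + 1" and fr: "forbidden k w (s + r)"
    obtain i where i: "1 \<le> i" "i \<le> k - 2" "(D - i) mod k = r"
    proof (cases "r < d")
      case True
      have "(D - (d - r)) mod k = d - (d - r)" using modsub[OF Dk, of "d - r"] dk by (simp add: d_def)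
      hence "(D - (d - r)) mod k = r" using True by simp
      moreover have "1 \<le> d - r" "d - r \<le> k - 2" using True dk r by auto
      ultimately show ?thesis using that by blast
    next
      case False
      hence rd: "d + 1 < r" using r by simp
      have ms: "(D - (k + d - r)) mod k = (if k + d - r \<le> D mod k then D mod k - (k + d - r) else k + D mod k - (k + d - r))"
        by (rule modsub[OF Dk]) (use r rd in simp)
      have "\<not> k + d - r \<le> d" using r by simp
      hence "(D - (k + d - r)) mod k = k + d - (k + d - r)" using ms unfolding d_def[symmetric] by simp
      hence "(D - (k + d - r)) mod k = r" using rd r by simp
      moreover have "1 \<le> k + d - r" "k + d - r \<le> k - 2" using rd r by auto
      ultimately show ?thesis using that by blast
    qed
    have ti: "i \<le> t" "i < D" using i st Dk by (auto simp: D_def)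
    have js: "(t - i) - s = D - i" using ti st by (simp add: D_def)
    show "2 \<le> r \<and> forbidden k w (s + (r - 1))"
    proof (rule clos[OF k gap per])
      show "s < t - i" "t - i < t" using ti i st by (auto simp: D_def)
      show "\<not> Kc k w (t - i)" using nK i by simp
      show "(t - i - s) mod k = r" using js i by simp
    qed (use r fr in auto)
  qed
  have Fu: "forbidden k w t \<longleftrightarrow> forbidden k w (t+k-1)" using F_u[OF k3 ut] .
  have pt: "forbidden k w t \<longleftrightarrow> d \<noteq> 0 \<and> forbidden k w (s + d)"
    by (rule perI) (use st k in \<open>auto simp: d_def D_def\<close>)
  have e1: "t + k - 1 - s = D + (k - 1)" using st k by (simp add: D_def)
  have dn0: "d \<noteq> 0"
  proof
    assume d0: "d = 0"
    have "(D + (k - 1)) mod k = d + (k - 1)" using modadd[of "k-1" k D] d0 k by (simp add: d_def)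
    hence "(t + k - 1 - s) mod k = k - 1" unfolding e1 using d0 by simp
    hence "forbidden k w (t+k-1) \<longleftrightarrow> k - 1 \<noteq> 0 \<and> forbidden k w (s + (k-1))"
      by (intro perI) (use st k in auto)
    hence "forbidden k w t" using Fu Fsk k by simp
    thus False using pt d0 by simp
  qed
  have m1: "(t + k - 1 - s) mod k = d - 1" unfolding e1 using modkm1[of D k] dn0 k by (simp add: d_def)
  have pt1: "forbidden k w (t+k-1) \<longleftrightarrow> d - 1 \<noteq> 0 \<and> forbidden k w (s + (d - 1))"
    by (rule perI[OF _ _ m1]) (use st k in auto)
  have low: "\<And>r. 1 \<le> r \<Longrightarrow> r < d \<Longrightarrow> \<not> forbidden k w (s + r)"
  proof -
    fix r assume "1 \<le> r" "r < d"
    thus "\<not> forbidden k w (s + r)"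
    proof (induction r rule: nat_induct_at_least)
      case base
      show ?case
      proof
        assume "forbidden k w (s + 1)"
        hence "2 \<le> (1::nat)" using Cl[of 1] base dk by auto
        thus False by simp
      qed
    next
      case (Suc n)
      show ?case
      proof
        assume "forbidden k w (s + Suc n)"
        hence "forbidden k w (s + (Suc n - 1))" using Cl[of "Suc n"] Suc.prems Suc.hyps dk by auto
        thus False using Suc.IH Suc.prems by simp
      qed
    qed
  qed
  have nd: "\<not> forbidden k w (s + d)"
  proof
    assume "forbidden k w (s + d)"
    hence "forbidden k w (t+k-1)" using pt Fu dn0 by simp
    hence a: "d - 1 \<noteq> 0" "forbidden k w (s + (d - 1))" using pt1 by auto
    have "1 \<le> d - 1" "d - 1 < d" using a(1) by auto
    thus False using low a(2) by blast
  qed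
  have dk2: "d \<le> k - 2"
  proof (rule ccontr)
    assume "\<not> d \<le> k - 2"
    hence "d = k - 1" using dk by simp
    thus False using nd Fsk k by simp
  qed
  have high: "\<And>n. n \<le> k - 2 - d \<Longrightarrow> forbidden k w (s + (k - 1 - n))"
  proof -
    fix n assume "n \<le> k - 2 - d"
    thus "forbidden k w (s + (k - 1 - n))"
    proof (induction n)
      case 0 thus ?case using Fsk k by simp
    next
      case (Suc n)
      have a: "forbidden k w (s + (k - 1 - n))" using Suc by simp
      have "2 \<le> k - 1 - n \<and> forbidden k w (s + (k - 1 - n - 1))"
        by (rule Cl[OF _ _ _ _ a]) (use Suc.prems dk2 k in auto)
      thus ?case by (simp add: diff_Suc)
    qed
  qed
  have highr: "\<And>r. d + 1 \<le> r \<Longrightarrow> r < k \<Longrightarrow> forbidden k w (s + r)"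
  proof -
    fix r assume r: "d + 1 \<le> r" "r < k"
    have "forbidden k w (s + (k - 1 - (k - 1 - r)))" using high[of "k - 1 - r"] r by simp
    thus "forbidden k w (s + r)" using r by simp
  qed
  have Fs0: "forbidden k w s" using F_u[OF k3 us] Fsk by simp
  define j where "j = k - 1 - d"
  have j: "1 \<le> j" "j \<le> k - 2" "k - j = d + 1" using dk2 dn0 by (auto simp: j_def)
  have s_eq: "Floc k w s = {0} \<union> {k - j..k - 1}"
  proof (rule set_eqI)
    fix i
    show "i \<in> Floc k w s \<longleftrightarrow> i \<in> {0} \<union> {k - j..k - 1}"
    proof (cases "i = 0")
      case True thus ?thesis using Fs0 k by (simp add: Floc_def)
    next
      case n0: False
      show ?thesis
      proof (cases "i \<le> d")
        case True
        have "\<not> forbidden k w (s + i)"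
        proof (cases "i = d")
          case True thus ?thesis using nd by simp
        next
          case False thus ?thesis using low[of i] n0 \<open>i \<le> d\<close> by simp
        qed
        thus ?thesis using True n0 j by (auto simp: Floc_def)
      next
        case False
        thus ?thesis using highr[of i] j n0 by (auto simp: Floc_def)
      qed
    qed
  qed
  have t_eq: "Floc k w t = {1..j}"
  proof (rule set_eqI)
    fix i
    show "i \<in> Floc k w t \<longleftrightarrow> i \<in> {1..j}"
    proof (cases "i < k")
      case False thus ?thesis using j by (auto simp: Floc_def)
    next
      case ik: True
      have e2: "t + i - s = D + i" using st by (simp add: D_def)
      have res: "(t + i - s) mod k = (if d + i < k then d + i else d + i - k)"
        unfolding e2 using modadd[OF ik, of D] by (simp add: d_def)
      show ?thesis
      proof (cases "d + i < k")
        case True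
        hence "(t + i - s) mod k = d + i" using res by simp
        hence pe: "forbidden k w (t + i) \<longleftrightarrow> d + i \<noteq> 0 \<and> forbidden k w (s + (d + i))"
          by (intro perI) (use st ik in auto)
        show ?thesis
        proof (cases "i = 0")
          case True thus ?thesis using pe nd by (simp add: Floc_def)
        next
          case False
          hence "forbidden k w (s + (d + i))" using highr[of "d+i"] True by simp
          thus ?thesis using pe False True ik j by (auto simp: Floc_def j_def)
        qed
      next
        case False
        hence "(t + i - s) mod k = d + i - k" using res by simp
        hence pe: "forbidden k w (t + i) \<longleftrightarrow> d + i - k \<noteq> 0 \<and> forbidden k w (s + (d + i - k))"
          by (intro perI) (use st ik in auto)
        have "\<not> forbidden k w (t + i)"
        proof (cases "d + i - k = 0")
          case True thus ?thesis using pe by simp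
        next
          case nz: False
          have "d + i - k < d" using ik False by simp
          thus ?thesis using pe low[of "d + i - k"] nz by simp
        qed
        moreover have "i \<notin> {1..j}" using False j_def by auto
        ultimately show ?thesis by (simp add: Floc_def)
      qed
    qed
  qed
  show ?thesis using j s_eq t_eq by blast
qed

lemma caseB2:
  assumes k: "4 \<le> k" and us: "occ k w (uw k) s" and vt: "occ k w (vw k) t" and st: "s + k \<le> t"
    and gap: "\<forall>r. s < r \<and> r < t \<longrightarrow> \<not> occ_uv k w r"
    and cd: "card (Floc k w t) < card (Floc k w s)"
  shows "\<exists>i j. i < j \<and> j \<le> k \<and> j \<noteq> i + 1 \<and>
               Floc k w t = {0..i} \<union> {j..k - 1} \<and>
               Floc k w s = {0} \<union> {j - i - 1..k - 1} \<and>
               [int t - (int s + int k) = int (k - 1 - i)] (mod int k)"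
proof -
  have k1: "1 \<le> k" and k2: "2 \<le> k" and k3: "3 \<le> k" using k by auto
  have ot: "occ_uv k w t" using vt by (simp add: occ_uv_def)
  note BC = B_common[OF k us ot st gap cd]
  have Fsk: "forbidden k w (s+k-1)" using BC(1) .
  have per: "\<And>j. s < j \<Longrightarrow> j < t + k \<Longrightarrow> forbidden k w j \<longleftrightarrow> (j - s) mod k \<noteq> 0 \<and> forbidden k w (s + (j - s) mod k)"
    using BC(2) by blast
  have perI: "\<And>j x. s < j \<Longrightarrow> j < t + k \<Longrightarrow> (j - s) mod k = x \<Longrightarrow> forbidden k w j \<longleftrightarrow> x \<noteq> 0 \<and> forbidden k w (s + x)"
  proof -
    fix j x assume a: "s < j" "j < t + k" "(j - s) mod k = x"
    have "forbidden k w j \<longleftrightarrow> (j - s) mod k \<noteq> 0 \<and> forbidden k w (s + (j - s) mod k)" by (rule per) (use a in auto)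
    thus "forbidden k w j \<longleftrightarrow> x \<noteq> 0 \<and> forbidden k w (s + x)" using a(3) by simp
  qed
  define D where "D = t - s"
  define d where "d = D mod k"
  have Dk: "k \<le> D" using st by (simp add: D_def)
  have dk: "d < k" using k by (simp add: d_def)
  have wt: "w!t = B" using v_let0[OF vt, of 0] k by simp
  define m where "m = (LEAST m. w!(s+k+m) = B)"
  have ex: "w!(s+k+(t-s-k)) = B" using wt st by simp
  have mB: "w!(s+k+m) = B" unfolding m_def by (rule LeastI, rule ex)
  have mle: "m \<le> t - s - k" unfolding m_def by (rule Least_le, rule ex)
  have mA: "\<And>p. p < m \<Longrightarrow> w!(s+k+p) = A"
  proof -
    fix p assume "p < m"
    hence "w!(s+k+p) \<noteq> B" unfolding m_def by (rule not_less_Least)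
    thus "w!(s+k+p) = A" by (cases "w!(s+k+p)") auto
  qed
  have aA: "\<And>p. 1 \<le> p \<Longrightarrow> p < k + m \<Longrightarrow> w!(s+p) = A"
  proof -
    fix p assume p: "1 \<le> p" "p < k + m"
    show "w!(s+p) = A"
    proof (cases "p < k")
      case True thus ?thesis using u_let1[OF us p(1)] by simp
    next
      case False
      have "p - k < m" using p False by simp
      hence "w!(s+k+(p-k)) = A" by (rule mA)
      moreover have "s+k+(p-k) = s+p" using False by simp
      ultimately show ?thesis by simp
    qed
  qed
  have nK: "\<And>i. 1 \<le> i \<Longrightarrow> i \<le> k - 2 \<Longrightarrow> \<not> Kc k w (s + k + m - i)"
  proof -
    fix i assume i: "1 \<le> i" "i \<le> k - 2"
    have "w!(s + k + m - i + 0) = A"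
    proof -
      have "s + k + m - i + 0 = s + (k + m - i)" using i by simp
      moreover have "w!(s + (k + m - i)) = A" using aA[of "k+m-i"] i by simp
      ultimately show ?thesis by simp
    qed
    moreover have "w!(s + k + m - i + i) = B" using mB i k by simp
    ultimately show "\<not> Kc k w (s + k + m - i)" using nKc_I[of 0 k i w "s+k+m-i"] i k by auto
  qed
  define x where "x = (k + m) mod k"
  have km: "k \<le> k + m" by simp
  have xk: "x < k" using k by (simp add: x_def)
  have Cl: "\<And>r. 1 \<le> r \<Longrightarrow> r < k \<Longrightarrow> r \<noteq> x \<Longrightarrow> r \<noteq> x + 1 \<Longrightarrow> forbidden k w (s + r) \<Longrightarrow> 2 \<le> r \<and> forbidden k w (s + (r - 1))"
  proof -
    fix r assume r: "1 \<le> r" "r < k" "r \<noteq> x" "r \<noteq> x + 1" and fr: "forbidden k w (s + r)"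
    obtain i where i: "1 \<le> i" "i \<le> k - 2" "(k + m - i) mod k = r"
    proof (cases "r < x")
      case True
      have ms: "(k + m - (x - r)) mod k = (if x - r \<le> (k + m) mod k then (k + m) mod k - (x - r) else k + (k + m) mod k - (x - r))"
        by (rule modsub[OF km]) (use xk in simp)
      hence "(k + m - (x - r)) mod k = x - (x - r)" unfolding x_def[symmetric] by simp
      hence "(k + m - (x - r)) mod k = r" using True by simp
      moreover have "1 \<le> x - r" "x - r \<le> k - 2" using True xk r by auto
      ultimately show ?thesis using that by blast
    next
      case False
      hence rd: "x + 1 < r" using r by simp
      have ms: "(k + m - (k + x - r)) mod k = (if k + x - r \<le> (k + m) mod k then (k + m) mod k - (k + x - r) else k + (k + m) mod k - (k + x - r))"
        by (rule modsub[OF km]) (use r rd in simp)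
      have "\<not> k + x - r \<le> x" using r by simp
      hence "(k + m - (k + x - r)) mod k = k + x - (k + x - r)" using ms unfolding x_def[symmetric] by simp
      hence "(k + m - (k + x - r)) mod k = r" using rd r by simp
      moreover have "1 \<le> k + x - r" "k + x - r \<le> k - 2" using rd r by auto
      ultimately show ?thesis using that by blast
    qed
    have js: "(s + k + m - i) - s = k + m - i" using i k by simp
    show "2 \<le> r \<and> forbidden k w (s + (r - 1))"
    proof (rule clos[OF k gap per])
      show "s < s + k + m - i" "s + k + m - i < t" using i k mle st by auto
      show "\<not> Kc k w (s + k + m - i)" using nK i by simp
      show "(s + k + m - i - s) mod k = r" using js i by simp
    qed (use r fr in auto)
  qed
  have lowx: "\<And>r. 1 \<le> r \<Longrightarrow> r < x \<Longrightarrow> \<not> forbidden k w (s + r)"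
  proof -
    fix r assume "1 \<le> r" "r < x"
    thus "\<not> forbidden k w (s + r)"
    proof (induction r rule: nat_induct_at_least)
      case base
      show ?case
      proof
        assume "forbidden k w (s + 1)"
        hence "2 \<le> (1::nat)" using Cl[of 1] base xk by auto
        thus False by simp
      qed
    next
      case (Suc n)
      show ?case
      proof
        assume "forbidden k w (s + Suc n)"
        hence "forbidden k w (s + (Suc n - 1))" using Cl[of "Suc n"] Suc.prems Suc.hyps xk by auto
        thus False using Suc.IH Suc.prems by simp
      qed
    qed
  qed
  have high: "\<And>n. n \<le> k - 2 - x \<Longrightarrow> forbidden k w (s + (k - 1 - n))"
  proof -
    fix n assume "n \<le> k - 2 - x"
    thus "forbidden k w (s + (k - 1 - n))"
    proof (induction n)
      case 0 thus ?case using Fsk k by simp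
    next
      case (Suc n)
      have a: "forbidden k w (s + (k - 1 - n))" using Suc by simp
      have "2 \<le> k - 1 - n \<and> forbidden k w (s + (k - 1 - n - 1))"
        by (rule Cl[OF _ _ _ _ a]) (use Suc.prems xk k in auto)
      thus ?case by (simp add: diff_Suc)
    qed
  qed
  have highr: "\<And>r. x + 1 \<le> r \<Longrightarrow> r < k \<Longrightarrow> forbidden k w (s + r)"
  proof -
    fix r assume r: "x + 1 \<le> r" "r < k"
    have "forbidden k w (s + (k - 1 - (k - 1 - r)))" using high[of "k - 1 - r"] r by simp
    thus "forbidden k w (s + r)" using r by simp
  qed
  obtain c where c: "1 \<le> c" "c \<le> k - 1" and cf: "\<And>r. 1 \<le> r \<Longrightarrow> r < k \<Longrightarrow> forbidden k w (s + r) \<longleftrightarrow> c \<le> r"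
  proof (cases "x = 0")
    case True
    show ?thesis
    proof (rule that[of 1])
      fix r assume "1 \<le> r" "r < k"
      thus "forbidden k w (s + r) \<longleftrightarrow> 1 \<le> r" using highr True by simp
    qed (use k in auto)
  next
    case x0: False
    show ?thesis
    proof (cases "forbidden k w (s + x)")
      case True
      show ?thesis
      proof (rule that[of x])
        fix r assume r: "1 \<le> r" "r < k"
        show "forbidden k w (s + r) \<longleftrightarrow> x \<le> r"
          using lowx[OF r(1)] highr[OF _ r(2)] True by (cases "r < x"; cases "r = x") auto
      qed (use x0 xk in auto)
    next
      case False
      have xk1: "x \<noteq> k - 1" using False Fsk k by auto
      show ?thesis
      proof (rule that[of "x+1"])
        fix r assume r: "1 \<le> r" "r < k"
        show "forbidden k w (s + r) \<longleftrightarrow> x + 1 \<le> r"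
          using lowx[OF r(1)] highr[OF _ r(2)] False by (cases "r < x"; cases "r = x") auto
      qed (use xk xk1 in auto)
    qed
  qed
  have Ft: "forbidden k w t" using F_v[OF k2 vt] .
  have pt: "forbidden k w t \<longleftrightarrow> d \<noteq> 0 \<and> forbidden k w (s + d)"
    by (rule perI) (use st k in \<open>auto simp: d_def D_def\<close>)
  have dn0: "d \<noteq> 0" and cd': "c \<le> d" using pt Ft cf[of d] dk by auto
  define i where "i = k - 1 - d"
  define j where "j = k - d + c"
  have ij: "i < j" "j \<le> k" "j \<noteq> i + 1" "j - i - 1 = c" "k - 1 - i = d"
    using dk dn0 cd' c by (auto simp: i_def j_def)
  have s_eq: "Floc k w s = {0} \<union> {j - i - 1..k - 1}"
  proof (rule set_eqI)
    fix y
    show "y \<in> Floc k w s \<longleftrightarrow> y \<in> {0} \<union> {j - i - 1..k - 1}"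
    proof (cases "y = 0")
      case True thus ?thesis using F_u[OF k3 us] Fsk k by (simp add: Floc_def)
    next
      case False
      thus ?thesis using cf[of y] ij(4) c by (auto simp: Floc_def)
    qed
  qed
  have t_eq: "Floc k w t = {0..i} \<union> {j..k - 1}"
  proof (rule set_eqI)
    fix y
    show "y \<in> Floc k w t \<longleftrightarrow> y \<in> {0..i} \<union> {j..k - 1}"
    proof (cases "y < k")
      case False thus ?thesis using ij by (auto simp: Floc_def)
    next
      case yk: True
      have e2: "t + y - s = D + y" using st by (simp add: D_def)
      have res: "(t + y - s) mod k = (if d + y < k then d + y else d + y - k)"
        unfolding e2 using modadd[OF yk, of D] by (simp add: d_def)
      show ?thesis
      proof (cases "d + y < k")
        case True
        hence "(t + y - s) mod k = d + y" using res by simp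
        hence pe: "forbidden k w (t + y) \<longleftrightarrow> d + y \<noteq> 0 \<and> forbidden k w (s + (d + y))"
          by (intro perI) (use st yk in auto)
        have "forbidden k w (s + (d + y))" using cf[of "d + y"] True dn0 cd' by simp
        thus ?thesis using pe True yk dn0 by (auto simp: Floc_def i_def)
      next
        case False
        hence "(t + y - s) mod k = d + y - k" using res by simp
        hence pe: "forbidden k w (t + y) \<longleftrightarrow> d + y - k \<noteq> 0 \<and> forbidden k w (s + (d + y - k))"
          by (intro perI) (use st yk in auto)
        have "forbidden k w (t + y) \<longleftrightarrow> c \<le> d + y - k"
        proof (cases "d + y - k = 0")
          case True thus ?thesis using pe c by simp
        next
          case nz: False
          have "d + y - k < k" using yk dk by simp
          thus ?thesis using pe cf[of "d + y - k"] nz by simp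
        qed
        moreover have "c \<le> d + y - k \<longleftrightarrow> j \<le> y" using False dk by (auto simp: j_def)
        moreover have "\<not> y \<le> i" using False dk by (auto simp: i_def)
        ultimately show ?thesis using yk by (auto simp: Floc_def)
      qed
    qed
  qed
  have cong: "[int t - (int s + int k) = int (k - 1 - i)] (mod int k)"
  proof -
    have "int t - (int s + int k) = int D - int k" using st by (simp add: D_def)
    hence "(int t - (int s + int k)) mod int k = (int D - int k) mod int k" by (rule arg_cong)
    also have "\<dots> = int D mod int k" by (rule minus_mod_self2)
    also have "\<dots> = int d" by (simp add: d_def zmod_int)
    also have "\<dots> = int d mod int k" using dk by simp
    finally show ?thesis unfolding ij(5) cong_def .
  qed
  show ?thesis using ij s_eq t_eq cong by blast
qed


theorem theorem3:
  fixes k :: nat and w :: word and s t :: nat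
  assumes "k \<ge> 4"
    and "min_uncompletable k w"
    and "consecutive k w s t"
    and "card (Floc k w s) > card (Floc k w t)"
  shows "(occ k w (uw k) s \<and> occ k w (uw k) t \<and>
          (\<exists>j. 1 \<le> j \<and> j \<le> k - 2 \<and>
               Floc k w s = {0} \<union> {k - j..k - 1} \<and> Floc k w t = {1..j}))
       \<or> (occ k w (vw k) s \<and> occ k w (uw k) t \<and> overlap k s t \<and>
          Floc k w s = {0, k - 1} \<and> Floc k w t = {1})
       \<or> (occ k w (uw k) s \<and> occ k w (vw k) t \<and>
          (\<exists>i j. i < j \<and> j \<le> k \<and> j \<noteq> i + 1 \<and>
               Floc k w t = {0..i} \<union> {j..k - 1} \<and>
               Floc k w s = {0} \<union> {j - i - 1..k - 1} \<and>
               [int t - (int s + int k) = int (k - 1 - i)] (mod int k)))"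
proof -
  have k: "4 \<le> k" using assms(1) .
  have mu: "min_uncompletable k w" using assms(2) .
  have c: "consecutive k w s t" using assms(3) .
  have cd: "card (Floc k w t) < card (Floc k w s)" using assms(4) .
  have st: "s < t" and os: "occ_uv k w s" and ot: "occ_uv k w t" using c by (auto simp: consecutive_def)
  have gap: "\<forall>r. s < r \<and> r < t \<longrightarrow> \<not> occ_uv k w r" using gapfree[OF k c] by blast
  show ?thesis
  proof (cases "t < s + k")
    case True
    have ov: "occ k w (vw k) s" "occ k w (uw k) t" "t = s + k - 2" using overlap_only[OF k os ot st True] by auto
    have "Floc k w s = {0, k-1} \<and> Floc k w t = {1}" using caseA1[OF k mu ov gap cd] .
    moreover have "overlap k s t" using True by (simp add: overlap_def)
    ultimately show ?thesis using ov by blast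
  next
    case False
    hence st2: "s + k \<le> t" by simp
    show ?thesis
    proof (cases "occ k w (vw k) s")
      case True
      thus ?thesis using caseA2[OF k mu True ot st2 gap cd] by blast
    next
      case False
      hence us: "occ k w (uw k) s" using os by (simp add: occ_uv_def)
      show ?thesis
      proof (cases "occ k w (uw k) t")
        case True
        thus ?thesis using caseB1[OF k us True st2 gap cd] us by blast
      next
        case False
        hence vt: "occ k w (vw k) t" using ot by (simp add: occ_uv_def)
        show ?thesis using caseB2[OF k us vt st2 gap cd] us vt by blast
      qed
    qed
  qed
qed

end
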